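(* Let $0<\varepsilon\le1/2$, $k$ a positive integer and $OPT\ge0$. Let $X\subset\mathbb{R}^d$ be a finite nonempty (multi)set and $C\subset\mathbb{R}^d$ a finite nonempty set with $\Phi(C,X)\le\frac{\varepsilon}{6k}\,OPT$. For each $x\in X$ let $c(x)\in C$ be a nearest point of $C$ to $x$, and let $X'=\{c(x):x\in X\}$ (as a multiset). If $m''\in\mathbb{R}^d$ satisfies $\Phi(m'',X')\le(1+\frac\varepsilon8)\Delta(X')$, then $$\Phi(m'',X)\le\left(1+\frac\varepsilon2\right)\Delta(X) + \frac{\varepsilon}{2k}\,OPT.$$
   Context: $\mu(Y)$ denotes the centroid of a finite multiset $Y$, $\Delta(Y)=\sum_{y\in Y}\|y-\mu(Y)\|^2$. For a point $p$, $\Phi(p,Y) = \sum_{y\in Y}\|y-p\|^2$; for a finite set $C$, $\Phi(C,Y) = \sum_{y\in Y}\min_{c\in C}\|y-c\|^2$. *)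

theory Defs
  imports "HOL-Analysis.Analysis" "HOL-Library.Multiset"
begin

definition centroid :: "'a::euclidean_space multiset \<Rightarrow> 'a" where
  "centroid Y = (1 / real (size Y)) *\<^sub>R (\<Sum>\<^sub># Y)"

definition Phi_pt :: "'a::euclidean_space \<Rightarrow> 'a multiset \<Rightarrow> real" where
  "Phi_pt p Y = (\<Sum>y\<in>#Y. (norm (y - p))\<^sup>2)"

definition Delta :: "'a::euclidean_space multiset \<Rightarrow> real" where
  "Delta Y = Phi_pt (centroid Y) Y"

definition Phi_set :: "'a::euclidean_space set \<Rightarrow> 'a multiset \<Rightarrow> real" where
  "Phi_set C Y = (\<Sum>y\<in>#Y. Min ((\<lambda>c. (norm (y - c))\<^sup>2) ` C))"

end

theory Submission
  imports Defs
begin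

lemma phi_expand:
  "Phi_pt p Y = (\<Sum>y\<in>#Y. (norm y)\<^sup>2) - 2 * inner (\<Sum>\<^sub># Y) p + real (size Y) * (norm p)\<^sup>2"
proof (induction Y)
  case empty
  then show ?case by (simp add: Phi_pt_def)
next
  case (add a Y)
  have "(norm (a - p))\<^sup>2 = (norm a)\<^sup>2 - 2 * inner a p + (norm p)\<^sup>2"
    by (simp add: power2_norm_eq_inner inner_diff_left inner_diff_right inner_commute)
  then show ?case using add by (simp add: Phi_pt_def inner_add_left algebra_simps)
qed

lemma parallel:
  assumes "Y \<noteq> {#}"
  shows "Phi_pt p Y = Delta Y + real (size Y) * (norm (p - centroid Y))\<^sup>2"
proof -
  define n where "n = real (size Y)"
  define S where "S = \<Sum>\<^sub># Y"
  have n: "n > 0" using assms by (simp add: n_def nonempty_has_size)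
  have cen: "centroid Y = (1/n) *\<^sub>R S" by (simp add: centroid_def n_def S_def)
  have ex: "(norm (p - (1/n) *\<^sub>R S))\<^sup>2 = (norm p)\<^sup>2 - 2/n * inner S p + (norm S)\<^sup>2 / n^2"
    using n by (simp only: power2_norm_eq_inner)
      (simp add: inner_diff_left inner_diff_right inner_commute field_simps power2_eq_square)
  have ex2: "(norm ((1/n) *\<^sub>R S))\<^sup>2 = (norm S)\<^sup>2 / n^2"
    by (simp add: power_divide)
  have ex3: "inner S ((1/n) *\<^sub>R S) = (norm S)\<^sup>2 / n"
    by (simp add: power2_norm_eq_inner)
  have "- 2 * inner S p + n * (norm p)\<^sup>2 =
        - 2 * inner S ((1/n) *\<^sub>R S) + n * (norm ((1/n) *\<^sub>R S))\<^sup>2 + n * (norm (p - (1/n) *\<^sub>R S))\<^sup>2"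
    unfolding ex ex2 ex3 using n by (simp add: field_simps power2_eq_square)
  then show ?thesis
    unfolding Delta_def
    by (subst (1 2) phi_expand) (simp add: cen n_def S_def)
qed

lemma sum_mset_nonneg:
  "(\<Sum>x\<in>#Y. (norm (f x))\<^sup>2) \<ge> (0::real)"
  by (induction Y) auto

lemma sum_diff_mset:
  "(\<Sum>\<^sub># (image_mset (\<lambda>x. f x - g x) X)) = (\<Sum>\<^sub># (image_mset f X)) - (\<Sum>\<^sub># (image_mset g X))"
  for f g :: "'b \<Rightarrow> 'a::ab_group_add"
  by (induction X) (auto simp: algebra_simps)

lemma norm_sum_sq: "(norm (a + b))\<^sup>2 \<le> 2 * (norm a)\<^sup>2 + 2 * (norm (b::'a::real_inner))\<^sup>2"
proof -
  have "(norm (a+b))\<^sup>2 \<le> (norm a + norm b)\<^sup>2"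
    by (simp add: norm_triangle_ineq power_mono)
  also have "\<dots> \<le> 2 * (norm a)\<^sup>2 + 2 * (norm b)\<^sup>2"
    by (smt (verit) power2_sum sum_squares_bound)
  finally show ?thesis .
qed

theorem mainTheorem8:
  fixes \<epsilon> OPT :: real and k :: nat
    and X :: "'a::euclidean_space multiset" and C :: "'a set"
    and c :: "'a \<Rightarrow> 'a" and m :: 'a
  assumes "0 < \<epsilon>" and "\<epsilon> \<le> 1/2" and "0 < k" and "0 \<le> OPT"
    and "X \<noteq> {#}" and "finite C" and "C \<noteq> {}"
    and "Phi_set C X \<le> \<epsilon> / (6 * real k) * OPT"
    and "\<forall>x\<in>#X. c x \<in> C \<and> (\<forall>z\<in>C. norm (x - c x) \<le> norm (x - z))"
    and "Phi_pt m (image_mset c X) \<le> (1 + \<epsilon>/8) * Delta (image_mset c X)"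
  shows "Phi_pt m X \<le> (1 + \<epsilon>/2) * Delta X + \<epsilon> / (2 * real k) * OPT"
proof -
  define n where "n = real (size X)"
  define X' where "X' = image_mset c X"
  define e where "e = image_mset (\<lambda>x. x - c x) X"
  define \<mu> where "\<mu> = centroid X"
  define \<mu>' where "\<mu>' = centroid X'"
  define E where "E = (\<Sum>x\<in>#X. (norm (x - c x))\<^sup>2)"
  have X'ne: "X' \<noteq> {#}" using assms(5) by (simp add: X'_def)
  have ene: "e \<noteq> {#}" using assms(5) by (simp add: e_def)
  have szX': "size X' = size X" by (simp add: X'_def)
  have sze: "size e = size X" by (simp add: e_def)
  have npos: "n > 0" using assms(5) by (simp add: n_def nonempty_has_size)
  have Dge: "Delta Y \<ge> 0" for Y :: "'a multiset"
    by (simp add: Delta_def Phi_pt_def sum_mset_nonneg)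
  have Eeq: "E = Phi_set C X"
    unfolding E_def Phi_set_def
  proof (rule arg_cong[where f=sum_mset], rule image_mset_cong)
    fix x assume x: "x \<in># X"
    have "Min ((\<lambda>z. (norm (x - z))\<^sup>2) ` C) = (norm (x - c x))\<^sup>2"
    proof (rule Min_eqI)
      show "finite ((\<lambda>z. (norm (x - z))\<^sup>2) ` C)" using assms(6) by simp
      show "(norm (x - c x))\<^sup>2 \<in> (\<lambda>z. (norm (x - z))\<^sup>2) ` C" using assms(9) x by auto
      fix y assume "y \<in> (\<lambda>z. (norm (x - z))\<^sup>2) ` C"
      then obtain z where "z \<in> C" "y = (norm (x - z))\<^sup>2" by auto
      then show "(norm (x - c x))\<^sup>2 \<le> y" using assms(9) x by (simp add: power_mono)
    qed
    then show "(norm (x - c x))\<^sup>2 = Min ((\<lambda>z. (norm (x - z))\<^sup>2) ` C)" by simp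
  qed
  have Ege: "E \<ge> 0" by (simp add: E_def sum_mset_nonneg)
  have h1: "Phi_pt m X = Delta X + n * (norm (m - \<mu>))\<^sup>2"
    using parallel[OF assms(5)] by (simp add: n_def \<mu>_def)
  have h2: "Phi_pt m X' = Delta X' + n * (norm (m - \<mu>'))\<^sup>2"
    using parallel[OF X'ne] by (simp add: n_def \<mu>'_def szX')
  have h2': "n * (norm (m - \<mu>'))\<^sup>2 \<le> \<epsilon>/8 * Delta X'"
    using h2 assms(10) by (simp add: X'_def algebra_simps)
  have "Phi_pt \<mu> X' = (\<Sum>x\<in>#X. (norm ((x - \<mu>) + (c x - x)))\<^sup>2)"
    by (simp add: Phi_pt_def X'_def image_mset.compositionality o_def)
  also have "\<dots> \<le> (\<Sum>x\<in>#X. 2 * (norm (x - \<mu>))\<^sup>2 + 2 * (norm (x - c x))\<^sup>2)"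
    by (rule sum_mset_mono) (metis norm_minus_commute norm_sum_sq)
  also have "\<dots> = 2 * Delta X + 2 * E"
    by (simp add: sum_mset.distrib sum_mset_distrib_left Delta_def Phi_pt_def E_def \<mu>_def)
  finally have h3a: "Phi_pt \<mu> X' \<le> 2 * Delta X + 2 * E" .
  have "Phi_pt \<mu> X' \<ge> Delta X'"
    using parallel[OF X'ne, of \<mu>] by simp
  with h3a have h3: "Delta X' \<le> 2 * Delta X + 2 * E" by simp
  have sume: "\<Sum>\<^sub># e = \<Sum>\<^sub># X - \<Sum>\<^sub># X'"
    unfolding e_def X'_def using sum_diff_mset[of "\<lambda>x. x" c X] by simp
  have cdiff: "\<mu>' - \<mu> = - centroid e"
    by (simp add: \<mu>'_def \<mu>_def centroid_def sume szX' sze algebra_simps)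
  have "Phi_pt 0 e = E"
    by (simp add: Phi_pt_def e_def E_def image_mset.compositionality o_def)
  hence h4: "n * (norm (\<mu>' - \<mu>))\<^sup>2 \<le> E"
    using parallel[OF ene, of 0] Dge[of e] by (simp add: cdiff sze n_def)
  have h5: "(norm (m - \<mu>))\<^sup>2 \<le> 2 * (norm (m - \<mu>'))\<^sup>2 + 2 * (norm (\<mu>' - \<mu>))\<^sup>2"
    using norm_sum_sq[of "m - \<mu>'" "\<mu>' - \<mu>"] by simp
  have "n * (norm (m - \<mu>))\<^sup>2 \<le> 2 * (n * (norm (m - \<mu>'))\<^sup>2) + 2 * (n * (norm (\<mu>' - \<mu>))\<^sup>2)"
    using mult_left_mono[OF h5, of n] npos by (simp add: algebra_simps)
  also have "\<dots> \<le> \<epsilon>/4 * Delta X' + 2 * E" using h2' h4 by simp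
  also have "\<dots> \<le> \<epsilon>/4 * (2 * Delta X + 2 * E) + 2 * E"
    using mult_left_mono[OF h3, of "\<epsilon>/4"] assms(1) by simp
  finally have h6: "n * (norm (m - \<mu>))\<^sup>2 \<le> \<epsilon>/2 * Delta X + (\<epsilon>/2 + 2) * E"
    by (simp add: algebra_simps)
  have "(\<epsilon>/2 + 2) * E \<le> 3 * E" using assms(2) Ege by (simp add: mult_right_mono)
  also have "\<dots> \<le> 3 * (\<epsilon> / (6 * real k) * OPT)" using assms(8) Eeq by linarith
  also have "\<dots> = \<epsilon> / (2 * real k) * OPT" by simp
  finally have "(\<epsilon>/2 + 2) * E \<le> \<epsilon> / (2 * real k) * OPT" .
  then show ?thesis using h1 h6 by (simp add: algebra_simps)
qed

end
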